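(* Let $p$ be a prime, let $\Gamma$ be an abelian $p$-group of rank $r$ (written multiplicatively), and suppose that $X\subset\Gamma$ is a union of subgroups of $\Gamma$. Then $\langle X\rangle\subset X^r$.
   Context: The rank of a group is the minimal cardinality of a generating set. $X^r=\{x_1\cdots x_r:x_i\in X\}$ and $\langle X\rangle$ is the subgroup generated by $X$. *)

theory Defs
  imports "HOL-Algebra.Algebra"
begin

definition group_rank :: "('a, 'b) monoid_scheme \<Rightarrow> nat" where
  "group_rank G = (LEAST n. \<exists>S. S \<subseteq> carrier G \<and> finite S \<and> card S = n
                                  \<and> generate G S = carrier G)"

primrec set_power :: "('a, 'b) monoid_scheme \<Rightarrow> 'a set \<Rightarrow> nat \<Rightarrow> 'a set" where
  "set_power M Y 0 = {one M}"
| "set_power M Y (Suc n) = set_mult M (set_power M Y n) Y"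

end

theory Submission
  imports Defs
begin



context comm_group
begin

lemma sub_nat_pow: "subgroup K G \<Longrightarrow> x \<in> K \<Longrightarrow> x [^] (n::nat) \<in> K"
  using subgroup_int_pow_closed[of K x "int n"] by (simp add: int_pow_int)

lemma pw_subgroup:
  assumes "subgroup K G" shows "subgroup ((\<lambda>x. x [^] (n::nat)) ` K) G"
proof (rule subgroupI)
  have sub: "K \<subseteq> carrier G" using subgroup.subset[OF assms(1)] .
  show "(\<lambda>x. x [^] n) ` K \<subseteq> carrier G" using sub by auto
  show "(\<lambda>x. x [^] n) ` K \<noteq> {}" using subgroup.one_closed[OF assms] by auto
  show "inv a \<in> (\<lambda>x. x [^] n) ` K" if ha: "a \<in> (\<lambda>x. x [^] n) ` K" for a
  proof -
    obtain x where x: "x \<in> K" "a = x [^] n" using ha by blast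
    have xc: "x \<in> carrier G" using x(1) sub by blast
    have "inv a = (inv x) [^] n" using x(2) nat_pow_inv[OF xc, of n] by simp
    moreover have "inv x \<in> K" using subgroup.m_inv_closed[OF assms x(1)] .
    ultimately show ?thesis by blast
  qed
  show "a \<otimes> b \<in> (\<lambda>x. x [^] n) ` K" if ha: "a \<in> (\<lambda>x. x [^] n) ` K" and hb: "b \<in> (\<lambda>x. x [^] n) ` K" for a b
  proof -
    obtain x where x: "x \<in> K" "a = x [^] n" using ha by blast
    obtain y where y: "y \<in> K" "b = y [^] n" using hb by blast
    have xyc: "x \<in> carrier G" "y \<in> carrier G" using x y sub by auto
    have "a \<otimes> b = (x \<otimes> y) [^] n" using x(2) y(2) pow_mult_distrib[OF m_comm[OF xyc] xyc, of n] by simp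
    moreover have "x \<otimes> y \<in> K" using subgroup.m_closed[OF assms x(1) y(1)] .
    ultimately show ?thesis by blast
  qed
qed

lemma set_multI: "h \<in> H \<Longrightarrow> k \<in> K \<Longrightarrow> h \<otimes> k \<in> H <#> K"
  unfolding set_mult_def by blast

lemma set_multE: "x \<in> H <#> K \<Longrightarrow> (\<And>h k. h \<in> H \<Longrightarrow> k \<in> K \<Longrightarrow> x = h \<otimes> k \<Longrightarrow> P) \<Longrightarrow> P"
  unfolding set_mult_def by blast

lemma gen_union_sub:
  assumes "A \<subseteq> carrier G" "subgroup Q G"
  shows "generate G (A \<union> Q) \<subseteq> generate G A <#> Q"
proof (rule generate_subgroup_incl)
  show "subgroup (generate G A <#> Q) G"
    by (rule mult_subgroups[OF generate_is_subgroup[OF assms(1)] assms(2)])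
  show "A \<union> Q \<subseteq> generate G A <#> Q"
  proof
    fix x assume "x \<in> A \<union> Q"
    then show "x \<in> generate G A <#> Q"
    proof
      assume x: "x \<in> A"
      have "x \<in> generate G A" using x by (rule generate.incl)
      then have "x \<otimes> \<one> \<in> generate G A <#> Q" using subgroup.one_closed[OF assms(2)] by (rule set_multI)
      moreover have "x \<otimes> \<one> = x" using x assms(1) by (simp add: subsetD)
      ultimately show ?thesis by simp
    next
      assume x: "x \<in> Q"
      have "\<one> \<otimes> x \<in> generate G A <#> Q" using generate.one x by (rule set_multI)
      moreover have "\<one> \<otimes> x = x" using subgroup.subset[OF assms(2)] x by (simp add: subsetD)
      ultimately show ?thesis by simp
    qed
  qed
qed

lemma generate_subgroup_id:
  assumes "subgroup K G" shows "generate G K = K"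
proof
  show "generate G K \<subseteq> K" by (rule generate_subgroup_incl[OF subset_refl assms])
  show "K \<subseteq> generate G K" by (auto intro: generate.incl)
qed

lemma card_kernel_image:
  assumes "subgroup K G" "finite K"
  shows "card K = card {x\<in>K. x [^] (n::nat) = \<one>} * card ((\<lambda>x. x [^] n) ` K)"
proof -
  let ?f = "\<lambda>x. x [^] n"
  let ?Z = "{x\<in>K. x [^] n = \<one>}"
  have sub: "K \<subseteq> carrier G" using subgroup.subset[OF assms(1)] .
  have K: "(\<Union>y\<in>?f ` K. {x\<in>K. ?f x = y}) = K" by auto
  have "card (\<Union>y\<in>?f ` K. {x\<in>K. ?f x = y}) = (\<Sum>y\<in>?f ` K. card {x\<in>K. ?f x = y})"
    by (rule card_UN_disjoint) (use assms in auto)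
  then have "card K = (\<Sum>y\<in>?f ` K. card {x\<in>K. ?f x = y})" by (simp only: K)
  also have "\<dots> = (\<Sum>y\<in>?f ` K. card ?Z)"
  proof (rule sum.cong[OF refl])
    fix y assume "y \<in> ?f ` K"
    then obtain x0 where x0: "x0 \<in> K" "y = ?f x0" by blast
    have x0c: "x0 \<in> carrier G" using x0 sub by auto
    have "{x\<in>K. ?f x = y} = (\<lambda>z. x0 \<otimes> z) ` ?Z"
    proof
      show "{x\<in>K. ?f x = y} \<subseteq> (\<lambda>z. x0 \<otimes> z) ` ?Z"
      proof
        fix x assume x: "x \<in> {x\<in>K. ?f x = y}"
        have xc: "x \<in> carrier G" using x sub by auto
        have ik: "inv x0 \<otimes> x \<in> K" using x x0(1) subgroup.m_closed[OF assms(1) subgroup.m_inv_closed[OF assms(1)]] by blast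
        have "(inv x0 \<otimes> x) [^] n = inv (x0 [^] n) \<otimes> x [^] n"
          using pow_mult_distrib[of "inv x0" x n, OF m_comm] xc x0c nat_pow_inv[OF x0c] by simp
        also have "\<dots> = \<one>" using x x0 x0c by auto
        finally have zz: "inv x0 \<otimes> x \<in> ?Z" using ik by blast
        have "x = x0 \<otimes> (inv x0 \<otimes> x)" using xc x0c by (simp add: m_assoc[symmetric])
        then show "x \<in> (\<lambda>z. x0 \<otimes> z) ` ?Z" using zz by (rule image_eqI)
      qed
      show "(\<lambda>z. x0 \<otimes> z) ` ?Z \<subseteq> {x\<in>K. ?f x = y}"
      proof
        fix x assume "x \<in> (\<lambda>z. x0 \<otimes> z) ` ?Z"
        then obtain z where z: "z \<in> ?Z" "x = x0 \<otimes> z" by blast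
        have zc: "z \<in> carrier G" using z sub by auto
        have "?f x = ?f x0 \<otimes> ?f z" using z(2) pow_mult_distrib[of x0 z n, OF m_comm] zc x0c by simp
        moreover have "x \<in> K" using z x0 subgroup.m_closed[OF assms(1), of x0 z] by simp
        moreover have "?f z = \<one>" using z(1) by simp
        ultimately show "x \<in> {x\<in>K. ?f x = y}" using x0(2) x0c by simp
      qed
    qed
    moreover have "inj_on (\<lambda>z. x0 \<otimes> z) ?Z"
      by (rule inj_on_subset[OF inj_on_cmult[OF x0c]]) (use sub in auto)
    then have "card ((\<lambda>z. x0 \<otimes> z) ` ?Z) = card ?Z" by (rule card_image)
    ultimately show "card {x\<in>K. ?f x = y} = card ?Z" by simp
  qed
  also have "\<dots> = card ?Z * card (?f ` K)" by simp
  finally show ?thesis .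
qed

end


context comm_group
begin

lemma burnside:
  fixes p m :: nat
  assumes H: "subgroup H G" and K: "subgroup K G"
    and hyp: "H \<subseteq> K <#> ((\<lambda>x. x [^] p) ` H)"
    and pw1: "\<forall>x\<in>H. x [^] (p ^ m) = \<one>"
  shows "H \<subseteq> K"
proof -
  have Hc: "H \<subseteq> carrier G" using subgroup.subset[OF H] .
  have Kc: "K \<subseteq> carrier G" using subgroup.subset[OF K] .
  have step: "H \<subseteq> K <#> ((\<lambda>x. x [^] (p ^ j)) ` H)" for j
  proof (induction j)
    case 0
    show ?case
    proof
      fix h assume h: "h \<in> H"
      have "\<one> \<otimes> h [^] (p ^ 0) \<in> K <#> ((\<lambda>x. x [^] (p ^ 0)) ` H)"
        using subgroup.one_closed[OF K] imageI[OF h] by (rule set_multI)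
      moreover have "\<one> \<otimes> h [^] (p ^ 0) = h" using h Hc by (simp add: subsetD)
      ultimately show "h \<in> K <#> ((\<lambda>x. x [^] (p ^ 0)) ` H)" by simp
    qed
  next
    case (Suc j)
    show ?case
    proof
      fix h assume h: "h \<in> H"
      then have "h \<in> K <#> ((\<lambda>x. x [^] (p ^ j)) ` H)" using Suc.IH by blast
      then obtain k z where kz: "k \<in> K" "z \<in> (\<lambda>x. x [^] (p ^ j)) ` H" "h = k \<otimes> z"
        by (rule set_multE)
      then obtain w where w: "w \<in> H" "z = w [^] (p ^ j)" by blast
      have "w \<in> K <#> ((\<lambda>x. x [^] p) ` H)" using hyp w(1) by blast
      then obtain k' z' where kz': "k' \<in> K" "z' \<in> (\<lambda>x. x [^] p) ` H" "w = k' \<otimes> z'"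
        by (rule set_multE)
      then obtain u where u: "u \<in> H" "z' = u [^] p" by blast
      have kc: "k \<in> carrier G" "k' \<in> carrier G" using kz(1) kz'(1) Kc by auto
      have uc: "u \<in> carrier G" using u(1) Hc by auto
      have "z = k' [^] (p ^ j) \<otimes> (u [^] p) [^] (p ^ j)"
        using w(2) kz'(3) u(2) pow_mult_distrib[of k' "u [^] p" "p ^ j", OF m_comm] kc uc by simp
      also have "(u [^] p) [^] (p ^ j) = u [^] (p ^ Suc j)"
        using nat_pow_pow[OF uc] by simp
      finally have z: "z = k' [^] (p ^ j) \<otimes> u [^] (p ^ Suc j)" .
      have "h = (k \<otimes> k' [^] (p ^ j)) \<otimes> u [^] (p ^ Suc j)"
        using kz(3) z kc uc by (simp add: m_assoc)
      moreover have "k \<otimes> k' [^] (p ^ j) \<in> K"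
        using subgroup.m_closed[OF K kz(1) sub_nat_pow[OF K kz'(1)]] .
      moreover have "u [^] (p ^ Suc j) \<in> (\<lambda>x. x [^] (p ^ Suc j)) ` H" using u(1) by blast
      ultimately show "h \<in> K <#> ((\<lambda>x. x [^] (p ^ Suc j)) ` H)"
        using set_multI by metis
    qed
  qed
  show ?thesis
  proof
    fix h assume h: "h \<in> H"
    then have "h \<in> K <#> ((\<lambda>x. x [^] (p ^ m)) ` H)" using step by blast
    then obtain k z where kz: "k \<in> K" "z \<in> (\<lambda>x. x [^] (p ^ m)) ` H" "h = k \<otimes> z"
      by (rule set_multE)
    then have "z = \<one>" using pw1 by auto
    then show "h \<in> K" using kz Kc by (auto simp: subsetD)
  qed
qed

lemma card_gen_upper:
  fixes p :: nat
  assumes fin: "finite (carrier G)" and p: "p > 0"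
    and S: "finite S" "S \<subseteq> carrier G"
  shows "card (generate G (S \<union> (\<lambda>x. x [^] p) ` carrier G)) \<le> p ^ card S * card ((\<lambda>x. x [^] p) ` carrier G)"
  using S
proof (induction S rule: finite_induct)
  case empty
  have "subgroup ((\<lambda>x. x [^] p) ` carrier G) G" by (rule pw_subgroup[OF subgroup_self])
  then show ?case by (simp add: generate_subgroup_id)
next
  case (insert g F)
  let ?P = "(\<lambda>x. x [^] p) ` carrier G"
  let ?M = "generate G (F \<union> ?P)"
  have gc: "g \<in> carrier G" using insert by auto
  have FPc: "F \<union> ?P \<subseteq> carrier G" using insert by auto
  have Msub: "subgroup ?M G" by (rule generate_is_subgroup[OF FPc])
  have Mc: "?M \<subseteq> carrier G" by (rule generate_incl[OF FPc])
  have finM: "finite ?M" using finite_subset[OF Mc fin] .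
  have "insert g F \<union> ?P \<subseteq> {g} \<union> ?M" using generate.incl[of _ "F \<union> ?P" G] by blast
  then have "generate G (insert g F \<union> ?P) \<subseteq> generate G ({g} \<union> ?M)" by (rule mono_generate)
  also have "\<dots> \<subseteq> generate G {g} <#> ?M" by (rule gen_union_sub) (use gc Msub in auto)
  also have "\<dots> \<subseteq> (\<lambda>(i, m). g [^] i \<otimes> m) ` ({..<p} \<times> ?M)"
  proof
    fix x assume "x \<in> generate G {g} <#> ?M"
    then obtain a m where am: "a \<in> generate G {g}" "m \<in> ?M" "x = a \<otimes> m" by (rule set_multE)
    then obtain k :: int where k: "a = g [^] k" using generate_pow[OF gc] by blast
    define i where "i = nat (k mod int p)"
    define q where "q = k div int p"
    have ki: "k = int i + int p * q" using p by (simp add: i_def q_def)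
    have "g [^] k = g [^] (int i) \<otimes> g [^] (int p * q)" using ki int_pow_mult[OF gc] by simp
    also have "g [^] (int p * q) = (g [^] (int p)) [^] q" using int_pow_pow[OF gc] by simp
    finally have gk: "g [^] k = g [^] i \<otimes> (g [^] p) [^] q" by (simp add: int_pow_int)
    have gpM: "g [^] p \<in> ?M" using gc generate.incl[of "g [^] p" "F \<union> ?P" G] by blast
    have gqM: "(g [^] p) [^] q \<in> ?M" by (rule subgroup_int_pow_closed[OF Msub gpM])
    have mc: "m \<in> carrier G" using am(2) Mc by auto
    have x: "x = g [^] i \<otimes> ((g [^] p) [^] q \<otimes> m)"
      using am(3) k gk gc mc by (simp add: m_assoc)
    have "(g [^] p) [^] q \<otimes> m \<in> ?M" using subgroup.m_closed[OF Msub gqM am(2)] .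
    moreover have "i < p" using p by (simp add: i_def nat_less_iff)
    ultimately show "x \<in> (\<lambda>(i, m). g [^] i \<otimes> m) ` ({..<p} \<times> ?M)" using x by force
  qed
  finally have sub: "generate G (insert g F \<union> ?P) \<subseteq> (\<lambda>(i, m). g [^] i \<otimes> m) ` ({..<p} \<times> ?M)" .
  have "card (generate G (insert g F \<union> ?P)) \<le> card ((\<lambda>(i, m). g [^] i \<otimes> m) ` ({..<p} \<times> ?M))"
    by (rule card_mono[OF _ sub]) (use finM in simp)
  also have "\<dots> \<le> card ({..<p} \<times> ?M)" by (rule card_image_le) (use finM in simp)
  also have "\<dots> = p * card ?M" by (simp add: card_cartesian_product)
  also have "\<dots> \<le> p * (p ^ card F * card ?P)" using insert.IH insert.prems by simp
  finally show ?case using insert.hyps by simp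
qed

end


context comm_group
begin

lemma card_gen_lower:
  fixes p n :: nat
  assumes fin: "finite (carrier G)" and ord: "order G = p ^ n" and p: "Factorial_Ring.prime p"
    and Q: "subgroup Q G" and S: "finite S" "S \<subseteq> carrier G"
    and indep: "\<forall>g\<in>S. g \<notin> generate G ((S - {g}) \<union> Q)"
  shows "p ^ card S * card Q \<le> card (generate G (S \<union> Q))"
proof -
  have powp: "\<exists>i. card M = p ^ i" if M: "subgroup M G" for M
  proof -
    have "card (rcosets M) * card M = order G" by (rule lagrange[OF M])
    then have "card M dvd p ^ n" using ord by (metis dvd_triv_right)
    then show ?thesis using divides_primepow_nat[OF p] by blast
  qed
  have p1: "p > 1" using p prime_gt_1_nat by blast
  have Qc: "Q \<subseteq> carrier G" using subgroup.subset[OF Q] .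
  have main: "p ^ card T * card Q \<le> card (generate G (T \<union> Q))" if T: "finite T" "T \<subseteq> S" for T
  using T
  proof (induction T rule: finite_subset_induct')
    case empty
    show ?case using generate_subgroup_id[OF Q] by simp
  next
    case (insert a F)
    let ?M = "generate G (F \<union> Q)"
    let ?M' = "generate G (insert a F \<union> Q)"
    have Fc: "F \<union> Q \<subseteq> carrier G" "insert a F \<union> Q \<subseteq> carrier G" using insert S Qc by auto
    have sM: "subgroup ?M G" "subgroup ?M' G" using generate_is_subgroup Fc by auto
    have finM: "finite ?M'" using finite_subset[OF generate_incl[OF Fc(2)] fin] .
    have MM: "?M \<subseteq> ?M'" by (rule mono_generate) auto
    have aM': "a \<in> ?M'" by (rule generate.incl) auto
    have "F \<union> Q \<subseteq> (S - {a}) \<union> Q" using insert by auto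
    then have "?M \<subseteq> generate G ((S - {a}) \<union> Q)" by (rule mono_generate)
    then have aM: "a \<notin> ?M" using indep insert by blast
    have "?M \<subset> ?M'" using MM aM aM' by blast
    then have lt: "card ?M < card ?M'" using psubset_card_mono finM by blast
    obtain i where i: "card ?M = p ^ i" using powp[OF sM(1)] by blast
    obtain j where j: "card ?M' = p ^ j" using powp[OF sM(2)] by blast
    have "i < j" using lt i j p1 by (simp add: power_strict_increasing_iff)
    then have "p ^ Suc i \<le> p ^ j" by (intro power_increasing) (use p1 in auto)
    then have "p * card ?M \<le> card ?M'" using i j by simp
    moreover have "p ^ card F * card Q \<le> card ?M" using insert.IH .
    ultimately have "p * (p ^ card F * card Q) \<le> card ?M'"
      by (meson le_trans mult_le_mono2)
    then show ?case using insert.hyps by simp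
  qed
  show ?thesis using main[OF S(1) subset_refl] .
qed

lemma set_power_carrier: "A \<subseteq> carrier G \<Longrightarrow> set_power G A k \<subseteq> carrier G"
  by (induction k) (simp_all add: setmult_subset_G)

lemma set_power_mono:
  assumes A: "A \<subseteq> carrier G" "\<one> \<in> A" and kl: "k \<le> l"
  shows "set_power G A k \<subseteq> set_power G A l"
  using kl
proof (induction l rule: dec_induct)
  case base
  then show ?case by simp
next
  case (step l)
  have "set_power G A l \<subseteq> set_power G A (Suc l)"
  proof
    fix x assume x: "x \<in> set_power G A l"
    have "x \<otimes> \<one> \<in> set_power G A l <#> A" using x A(2) by (rule set_multI)
    moreover have "x \<in> carrier G" using x set_power_carrier[OF A(1), of l] by blast
    then have "x \<otimes> \<one> = x" by simp
    ultimately show "x \<in> set_power G A (Suc l)" by simp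
  qed
  then show ?case using step.IH by blast
qed

lemma gen_in_set_power:
  assumes A: "A \<subseteq> carrier G" and cyc: "\<forall>g\<in>A. generate G {g} \<subseteq> A"
    and S: "finite S" "S \<subseteq> A"
  shows "generate G S \<subseteq> set_power G A (card S)"
  using S
proof (induction S rule: finite_subset_induct')
  case empty
  then show ?case by (simp add: generate_empty)
next
  case (insert g F)
  have gc: "g \<in> carrier G" and Fc: "F \<subseteq> carrier G" using insert A by auto
  have "insert g F \<subseteq> F \<union> generate G {g}" using generate.incl[of g "{g}" G] by blast
  then have "generate G (insert g F) \<subseteq> generate G (F \<union> generate G {g})" by (rule mono_generate)
  also have "\<dots> \<subseteq> generate G F <#> generate G {g}"
    by (rule gen_union_sub[OF Fc generate_is_subgroup]) (use gc in auto)
  also have "\<dots> \<subseteq> set_power G A (card F) <#> A"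
    by (rule mono_set_mult) (use insert cyc in auto)
  also have "\<dots> = set_power G A (card (insert g F))" using insert.hyps by simp
  finally show ?case .
qed

end



theorem lemma5p5:
  fixes \<Gamma> :: "('a, 'b) monoid_scheme" and p :: nat and A :: "'a set"
    and \<H> :: "'a set set"
  assumes "Factorial_Ring.prime p"
    and "comm_group \<Gamma>"
    and "finite (carrier \<Gamma>)"
    and "\<exists>n. order \<Gamma> = p ^ n"
    and "\<H> \<noteq> {}"
    and "\<forall>H\<in>\<H>. subgroup H \<Gamma>"
    and "A = \<Union>\<H>"
  shows "generate \<Gamma> A \<subseteq> set_power \<Gamma> A (group_rank \<Gamma>)"
proof -
  interpret comm_group \<Gamma> by (rule assms(2))
  note p = assms(1) and fin = assms(3)
  obtain n where ord: "order \<Gamma> = p ^ n" using assms(4) by blast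
  have p1: "p > 1" using prime_gt_1_nat[OF p] .
  define r where "r = group_rank \<Gamma>"
  let ?Pw = "\<lambda>K. (\<lambda>x. x [^]\<^bsub>\<Gamma>\<^esub> p) ` K"
  define Pr where "Pr = (\<lambda>n. \<exists>S. S \<subseteq> carrier \<Gamma> \<and> finite S \<and> card S = n \<and> generate \<Gamma> S = carrier \<Gamma>)"
  have "Pr (card (carrier \<Gamma>))" unfolding Pr_def
    by (rule exI[of _ "carrier \<Gamma>"]) (simp add: fin generate_subgroup_id[OF subgroup_self])
  then have "Pr (LEAST n. Pr n)" by (rule LeastI)
  moreover have "r = (LEAST n. Pr n)" unfolding r_def group_rank_def Pr_def ..
  ultimately have "Pr r" by simp
  then obtain S0 where S0: "S0 \<subseteq> carrier \<Gamma>" "finite S0" "card S0 = r" "generate \<Gamma> S0 = carrier \<Gamma>"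
    unfolding Pr_def by blast
  let ?Gp = "{x \<in> carrier \<Gamma>. x [^]\<^bsub>\<Gamma>\<^esub> p = \<one>\<^bsub>\<Gamma>\<^esub>}"
  have c1: "card (carrier \<Gamma>) = card ?Gp * card (?Pw (carrier \<Gamma>))"
    by (rule card_kernel_image[OF subgroup_self fin])
  have S0P: "S0 \<union> ?Pw (carrier \<Gamma>) \<subseteq> carrier \<Gamma>" using S0 by auto
  have "generate \<Gamma> (S0 \<union> ?Pw (carrier \<Gamma>)) = carrier \<Gamma>"
  proof
    show "generate \<Gamma> (S0 \<union> ?Pw (carrier \<Gamma>)) \<subseteq> carrier \<Gamma>" by (rule generate_incl[OF S0P])
    have "generate \<Gamma> S0 \<subseteq> generate \<Gamma> (S0 \<union> ?Pw (carrier \<Gamma>))" by (rule mono_generate) blast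
    then show "carrier \<Gamma> \<subseteq> generate \<Gamma> (S0 \<union> ?Pw (carrier \<Gamma>))" using S0(4) by simp
  qed
  moreover have "card (generate \<Gamma> (S0 \<union> ?Pw (carrier \<Gamma>))) \<le> p ^ card S0 * card (?Pw (carrier \<Gamma>))"
    by (rule card_gen_upper[OF fin _ S0(2) S0(1)]) (use p1 in simp)
  ultimately have c2: "card ?Gp * card (?Pw (carrier \<Gamma>)) \<le> p ^ r * card (?Pw (carrier \<Gamma>))"
    using c1 S0(3) by simp
  have "finite (?Pw (carrier \<Gamma>))" using fin by (rule finite_imageI)
  moreover have "?Pw (carrier \<Gamma>) \<noteq> {}" by blast
  ultimately have "card (?Pw (carrier \<Gamma>)) > 0" by (simp add: card_gt_0_iff)
  then have Gp: "card ?Gp \<le> p ^ r" using c2 by (simp add: mult_le_cancel2)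
  have Ac: "A \<subseteq> carrier \<Gamma>"
  proof
    fix x assume "x \<in> A"
    then obtain K where K: "K \<in> \<H>" "x \<in> K" using assms(7) by blast
    have "subgroup K \<Gamma>" using assms(6) K(1) by blast
    then show "x \<in> carrier \<Gamma>" using K(2) by (rule subgroup.mem_carrier)
  qed
  obtain K0 where K0: "K0 \<in> \<H>" using assms(5) by blast
  have "subgroup K0 \<Gamma>" using assms(6) K0 by blast
  then have "\<one>\<^bsub>\<Gamma>\<^esub> \<in> K0" by (rule subgroup.one_closed)
  then have one: "\<one>\<^bsub>\<Gamma>\<^esub> \<in> A" using K0 assms(7) by blast
  have finA: "finite A" using finite_subset[OF Ac fin] .
  have cyc: "\<forall>g\<in>A. generate \<Gamma> {g} \<subseteq> A"
  proof
    fix g assume "g \<in> A"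
    then obtain K where K: "K \<in> \<H>" "g \<in> K" using assms(7) by blast
    have sK: "subgroup K \<Gamma>" using assms(6) K(1) by blast
    have "generate \<Gamma> {g} \<subseteq> K" by (rule generate_subgroup_incl[OF _ sK]) (use K(2) in blast)
    then show "generate \<Gamma> {g} \<subseteq> A" using K assms(7) by blast
  qed
  define H where "H = generate \<Gamma> A"
  have Hs: "subgroup H \<Gamma>" unfolding H_def by (rule generate_is_subgroup[OF Ac])
  have Hc: "H \<subseteq> carrier \<Gamma>" using subgroup.subset[OF Hs] .
  have AH: "A \<subseteq> H" unfolding H_def using generate.incl[of _ A \<Gamma>] by blast
  have PHs: "subgroup (?Pw H) \<Gamma>" by (rule pw_subgroup[OF Hs])
  have PHH: "?Pw H \<subseteq> H" using sub_nat_pow[OF Hs] by blast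
  let ?C = "\<lambda>S. S \<subseteq> A \<and> H \<subseteq> generate \<Gamma> S <#>\<^bsub>\<Gamma>\<^esub> ?Pw H"
  have "?C A"
  proof (intro conjI subsetI)
    fix h assume h: "h \<in> H"
    have "h \<otimes>\<^bsub>\<Gamma>\<^esub> \<one>\<^bsub>\<Gamma>\<^esub> [^]\<^bsub>\<Gamma>\<^esub> p \<in> generate \<Gamma> A <#>\<^bsub>\<Gamma>\<^esub> ?Pw H"
    proof (rule set_multI)
      show "h \<in> generate \<Gamma> A" using h unfolding H_def .
      show "\<one>\<^bsub>\<Gamma>\<^esub> [^]\<^bsub>\<Gamma>\<^esub> p \<in> ?Pw H" using subgroup.one_closed[OF Hs] by (rule imageI)
    qed
    moreover have "h \<in> carrier \<Gamma>" using h Hc by blast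
    ultimately show "h \<in> generate \<Gamma> A <#>\<^bsub>\<Gamma>\<^esub> ?Pw H" by simp
  qed simp
  then obtain S where S: "?C S" and Smin: "\<forall>S'. ?C S' \<longrightarrow> card S \<le> card S'"
    using ex_has_least_nat[of ?C A card] by blast
  have SA: "S \<subseteq> A" using S by (rule conjunct1)
  have finS: "finite S" using finite_subset[OF SA finA] .
  have Sc: "S \<subseteq> carrier \<Gamma>" using SA Ac by (rule subset_trans)
  have gSs: "subgroup (generate \<Gamma> S) \<Gamma>" by (rule generate_is_subgroup[OF Sc])
  have HS: "H \<subseteq> generate \<Gamma> S"
  proof (rule burnside[OF Hs gSs, of p n])
    show "H \<subseteq> generate \<Gamma> S <#>\<^bsub>\<Gamma>\<^esub> ?Pw H" using S by blast
    show "\<forall>x\<in>H. x [^]\<^bsub>\<Gamma>\<^esub> (p ^ n) = \<one>\<^bsub>\<Gamma>\<^esub>" proof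
      fix x assume "x \<in> H"
      then have "x \<in> carrier \<Gamma>" using Hc by blast
      then show "x [^]\<^bsub>\<Gamma>\<^esub> (p ^ n) = \<one>\<^bsub>\<Gamma>\<^esub>" using pow_order_eq_1 ord by metis
    qed
  qed
  have indep: "\<forall>g\<in>S. g \<notin> generate \<Gamma> ((S - {g}) \<union> ?Pw H)"
  proof (intro ballI notI)
    fix g assume g: "g \<in> S" and gM: "g \<in> generate \<Gamma> ((S - {g}) \<union> ?Pw H)"
    let ?M = "generate \<Gamma> ((S - {g}) \<union> ?Pw H)"
    have Mc: "(S - {g}) \<union> ?Pw H \<subseteq> carrier \<Gamma>" using Sc PHH Hc by blast
    have Ms: "subgroup ?M \<Gamma>" by (rule generate_is_subgroup[OF Mc])
    have "S \<subseteq> ?M" using gM generate.incl[of _ "(S - {g}) \<union> ?Pw H" \<Gamma>] by blast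
    then have "generate \<Gamma> S \<subseteq> ?M" by (rule generate_subgroup_incl[OF _ Ms])
    then have "H \<subseteq> ?M" using HS by blast
    also have "?M \<subseteq> generate \<Gamma> (S - {g}) <#>\<^bsub>\<Gamma>\<^esub> ?Pw H"
      by (rule gen_union_sub[OF _ PHs]) (use Sc in blast)
    finally have "?C (S - {g})" using S by blast
    then have "card S \<le> card (S - {g})" using Smin by blast
    moreover have "card (S - {g}) < card S" using finS g by (rule card_Diff1_less)
    ultimately show False by simp
  qed
  have low: "p ^ card S * card (?Pw H) \<le> card (generate \<Gamma> (S \<union> ?Pw H))"
    by (rule card_gen_lower[OF fin ord p PHs finS Sc indep])
  have "generate \<Gamma> (S \<union> ?Pw H) \<subseteq> H"
    by (rule generate_subgroup_incl[OF _ Hs]) (use SA AH PHH in blast)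
  then have "card (generate \<Gamma> (S \<union> ?Pw H)) \<le> card H"
    by (rule card_mono[OF finite_subset[OF Hc fin]])
  also have "card H = card {x \<in> H. x [^]\<^bsub>\<Gamma>\<^esub> p = \<one>\<^bsub>\<Gamma>\<^esub>} * card (?Pw H)"
    by (rule card_kernel_image[OF Hs finite_subset[OF Hc fin]])
  also have "\<dots> \<le> card ?Gp * card (?Pw H)"
  proof (rule mult_le_mono1, rule card_mono)
    show "finite ?Gp" using fin by simp
    show "{x \<in> H. x [^]\<^bsub>\<Gamma>\<^esub> p = \<one>\<^bsub>\<Gamma>\<^esub>} \<subseteq> ?Gp" using Hc by blast
  qed
  finally have "card (generate \<Gamma> (S \<union> ?Pw H)) \<le> card ?Gp * card (?Pw H)" .
  with low have c3: "p ^ card S * card (?Pw H) \<le> card ?Gp * card (?Pw H)" by (rule le_trans)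
  have "finite (?Pw H)" using finite_subset[OF Hc fin] by (rule finite_imageI)
  moreover have "\<one>\<^bsub>\<Gamma>\<^esub> [^]\<^bsub>\<Gamma>\<^esub> p \<in> ?Pw H" using subgroup.one_closed[OF Hs] by (rule imageI)
  ultimately have "card (?Pw H) > 0" by (simp add: card_gt_0_iff) blast
  then have "p ^ card S \<le> card ?Gp" using c3 by (simp add: mult_le_cancel2)
  then have "p ^ card S \<le> p ^ r" using Gp by (rule le_trans)
  then have Sr: "card S \<le> r" by (rule power_le_imp_le_exp[OF p1])
  have "H \<subseteq> set_power \<Gamma> A (card S)"
    using HS gen_in_set_power[OF Ac cyc finS SA] by (rule subset_trans)
  also have "\<dots> \<subseteq> set_power \<Gamma> A r" by (rule set_power_mono[OF Ac one Sr])
  finally show ?thesis unfolding H_def r_def .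
qed

end
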